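(* For every $\beta\in(0,1)$ there is a constant $c$ such that for every $\varepsilon>0$, all positive integers $d$ and $m\le n$ with $d$ dividing $n$, every $x_1,\dots,x_n\in[-1,1]^d$, and every public-string-oblivious attacker $M$, \[ \Pr\left[\left\|\mathrm{Manip}_{m,n}(\mathtt{EST}\infty_{n,d,\varepsilon},\vec x,M)-\frac1n\sum_{i=1}^n x_i\right\|_\infty< c\cdot\frac{e^\varepsilon+1}{e^\varepsilon-1}\left(\sqrt{\frac dn\log\frac d\beta}+\frac mn\right)\right]\ge 1-\beta . \]
   Context: Randomized response: for $b\in\{\pm1\}$, $R^{RR}_\varepsilon(b)$ outputs $b\cdot\frac{e^\varepsilon+1}{e^\varepsilon-1}$ with probability $\frac{e^\varepsilon}{e^\varepsilon+1}$ and $-b\cdot\frac{e^\varepsilon+1}{e^\varepsilon-1}$ otherwise. Protocol $\mathtt{EST}\infty_{n,d,\varepsilon}$: the public randomness is a uniformly random partition $\pi$ of $[n]$ into $d$ groups $\pi(1),\dots,\pi(d)$ of size $n/d$ each. User $i$ with data $x_i\in[-1,1]^d$ in group $g(i)$ computes $x_i'\in\{\pm1\}$ with $\Pr[x_i'=+1]=\frac12+\frac{x_{i,g(i)}}{2}$, and sends $y_i\sim R^{RR}_\varepsilon(x_i')$. The aggregator outputs $z\in\mathbb R^d$ with $z_g=\frac dn\sum_{i\in\pi(g)}y_i$. Manipulation game $\mathrm{Manip}_{m,n}(\Pi,\vec x,M)$ for a protocol $\Pi$ with public randomness $S$, randomizers $R_i$ with message set $\mathcal Y$ and aggregator $A$: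 $S$ is sampled; the attacker $M$ chooses a set $C\subseteq[n]$ with $|C|=m$ and messages $y_i\in\mathcal Y$ for $i\in C$ (possibly depending on $\vec x$, $S$, and its own randomness); each $i\notin C$ independently sends $y_i\sim R_i(x_i,S)$; the output is $A(y_1,\dots,y_n,S)$. $M$ is public-string-oblivious if $C$ is chosen independently of $S$. Here the message set is $\{\pm\frac{e^\varepsilon+1}{e^\varepsilon-1}\}$. *)

theory Defs
  imports "HOL-Probability.Probability"
begin

text \<open>Users are indexed by 0..<n, coordinates / groups by 0..<d.\<close>

definition rr_scale :: "real \<Rightarrow> real" where
  "rr_scale \<epsilon> = (exp \<epsilon> + 1) / (exp \<epsilon> - 1)"

text \<open>Randomized response on b \<in> {1,-1}.\<close>
definition RR :: "real \<Rightarrow> real \<Rightarrow> real pmf" where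
  "RR \<epsilon> b = map_pmf (\<lambda>keep. if keep then b * rr_scale \<epsilon> else - b * rr_scale \<epsilon>)
              (bernoulli_pmf (exp \<epsilon> / (exp \<epsilon> + 1)))"

text \<open>Honest randomizer of a user whose relevant coordinate is v \<in> [-1,1].\<close>
definition est_randomizer :: "real \<Rightarrow> real \<Rightarrow> real pmf" where
  "est_randomizer \<epsilon> v =
     bernoulli_pmf (1/2 + v/2) \<bind> (\<lambda>b. RR \<epsilon> (if b then 1 else -1))"

text \<open>Public randomness: partitions of users 0..<n into d labelled groups 0..<d of
  size n/d each, encoded by the group-assignment map g (normalised to 0 outside 0..<n).\<close>
definition est_partitions :: "nat \<Rightarrow> nat \<Rightarrow> (nat \<Rightarrow> nat) set" where
  "est_partitions n d = {g. (\<forall>i<n. g i < d) \<and> (\<forall>i. n \<le> i \<longrightarrow> g i = 0) \<and>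
                            (\<forall>j<d. card {i. i < n \<and> g i = j} = n div d)}"

text \<open>A public-string-oblivious attacker: a distribution (its own randomness) over pairs
  (C, f) where C is the corrupted set and f maps the public string to the corrupted messages.
  Since the draw is independent of the public string, C is chosen independently of S.\<close>
definition valid_attacker ::
  "real \<Rightarrow> nat \<Rightarrow> nat \<Rightarrow> (nat set \<times> ((nat \<Rightarrow> nat) \<Rightarrow> nat \<Rightarrow> real)) pmf \<Rightarrow> bool" where
  "valid_attacker \<epsilon> m n M \<longleftrightarrow>
     (\<forall>(C, f) \<in> set_pmf M. C \<subseteq> {..<n} \<and> card C = m \<and>
        (\<forall>S i. i \<in> C \<longrightarrow> f S i \<in> {rr_scale \<epsilon>, - rr_scale \<epsilon>}))"

text \<open>Output distribution of Manip_{m,n}(EST\<infinity>_{n,d,\<epsilon>}, x, M); output vector z with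
  z j for j<d (0 elsewhere).\<close>
definition manip_est ::
  "nat \<Rightarrow> nat \<Rightarrow> real \<Rightarrow> (nat \<Rightarrow> nat \<Rightarrow> real) \<Rightarrow>
   (nat set \<times> ((nat \<Rightarrow> nat) \<Rightarrow> nat \<Rightarrow> real)) pmf \<Rightarrow> (nat \<Rightarrow> real) pmf" where
  "manip_est n d \<epsilon> x M =
     pmf_of_set (est_partitions n d) \<bind> (\<lambda>g.
     M \<bind> (\<lambda>(C, f).
     Pi_pmf {..<n} 0 (\<lambda>i. if i \<in> C then return_pmf (f g i) else est_randomizer \<epsilon> (x i (g i))) \<bind> (\<lambda>y.
     return_pmf (\<lambda>j. if j < d then real d / real n * (\<Sum>i\<in>{i. i < n \<and> g i = j}. y i) else 0))))"

end

theory Submission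
  imports Defs
begin


lemma fin_hoeffding_pos:
  fixes a :: "'a \<Rightarrow> real"
  assumes A: "finite A" "A \<noteq> {}" and ab: "\<forall>i\<in>A. \<bar>a i\<bar> \<le> 1" and l: "l > 0"
  shows "(\<Sum>i\<in>A. exp (l * (a i - (\<Sum>j\<in>A. a j) / card A))) \<le> card A * exp (l^2/2)"
proof -
  interpret interval_bounded_random_variable "measure_pmf (pmf_of_set A)" a "-1" 1
  proof unfold_locales
    show "AE x in measure_pmf (pmf_of_set A). a x \<in> {- 1..1}"
      using ab A by (intro AE_pmfI) (auto simp: abs_le_iff)
  qed simp
  have E: "measure_pmf.expectation (pmf_of_set A) a = (\<Sum>j\<in>A. a j) / card A"
    using A by (subst integral_pmf_of_set) auto
  have Eb: "\<bar>measure_pmf.expectation (pmf_of_set A) a\<bar> \<le> 1"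
  proof -
    have "\<bar>\<Sum>j\<in>A. a j\<bar> \<le> (\<Sum>j\<in>A. 1)"
      using ab by (intro order.trans[OF sum_abs] sum_mono) auto
    thus ?thesis using A unfolding E by (simp add: divide_le_eq card_gt_0_iff)
  qed
  have bd: "l * (a y - measure_pmf.expectation (pmf_of_set A) a) \<le> l * 2" if "y \<in> A" for y
    using ab that Eb l by (intro mult_left_mono) (auto simp: abs_le_iff)
  have "nn_integral (measure_pmf (pmf_of_set A)) (\<lambda>x. exp (l * (a x - measure_pmf.expectation (pmf_of_set A) a))) \<le> ennreal (exp (l\<^sup>2 * (1 - (-1))\<^sup>2 / 8))"
    by (rule Hoeffdings_lemma_nn_integral[OF l])
  also have "nn_integral (measure_pmf (pmf_of_set A)) (\<lambda>x. exp (l * (a x - measure_pmf.expectation (pmf_of_set A) a))) 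
      = ennreal (measure_pmf.expectation (pmf_of_set A) (\<lambda>x. exp (l * (a x - measure_pmf.expectation (pmf_of_set A) a))))"
    by (intro nn_integral_eq_integral) (auto intro!: measure_pmf.integrable_const_bound[where B="exp (l*2)"] AE_pmfI bd simp: A)
  also have "measure_pmf.expectation (pmf_of_set A) (\<lambda>x. exp (l * (a x - measure_pmf.expectation (pmf_of_set A) a))) = (\<Sum>i\<in>A. exp (l * (a i - (\<Sum>j\<in>A. a j) / card A))) / card A"
    using A by (simp add: integral_pmf_of_set E)
  finally have "(\<Sum>i\<in>A. exp (l * (a i - (\<Sum>j\<in>A. a j) / card A))) / card A \<le> exp (l^2/2)"
    by (subst (asm) ennreal_le_iff) (auto simp: power2_eq_square)
  thus ?thesis using A by (simp add: divide_le_eq mult.commute card_gt_0_iff)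
qed

lemma fin_hoeffding:
  fixes a :: "'a \<Rightarrow> real"
  assumes A: "finite A" "A \<noteq> {}" and ab: "\<forall>i\<in>A. \<bar>a i\<bar> \<le> 1" and l: "\<bar>l'\<bar> \<le> \<bar>l\<bar>"
  shows "(\<Sum>i\<in>A. exp (l' * (a i - (\<Sum>j\<in>A. a j) / card A))) \<le> card A * exp (l^2/2)"
proof -
  have le: "card A * exp (l'^2/2) \<le> card A * exp (l^2/2)"
  proof -
    have "l'^2 \<le> l^2" using l by (metis abs_le_square_iff)
    thus ?thesis by (intro mult_left_mono) auto
  qed
  consider "l' > 0" | "l' = 0" | "l' < 0" by linarith
  thus ?thesis
  proof cases
    case 1 thus ?thesis using fin_hoeffding_pos[OF A ab 1] le by linarith
  next
    case 2 thus ?thesis using le by simp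
  next
    case 3
    have "(\<Sum>i\<in>A. exp (l' * (a i - (\<Sum>j\<in>A. a j) / card A))) = 
          (\<Sum>i\<in>A. exp ((-l') * ((-a i) - (\<Sum>j\<in>A. - a j) / card A)))"
      by (intro sum.cong) (auto simp: sum_negf algebra_simps)
    also have "\<dots> \<le> card A * exp ((-l')^2/2)"
      using 3 ab by (intro fin_hoeffding_pos[OF A]) auto
    finally show ?thesis using le by simp
  qed
qed



definition ksub :: "'a set \<Rightarrow> nat \<Rightarrow> 'a set set" where
  "ksub A k = {T. T \<subseteq> A \<and> card T = k}"

lemma finite_ksub: "finite A \<Longrightarrow> finite (ksub A k)"
  unfolding ksub_def by (rule finite_subset[of _ "Pow A"]) auto

lemma ksub_pick:
  fixes F :: "'a set \<Rightarrow> real"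
  assumes A: "finite A"
  shows "real (Suc k) * (\<Sum>T\<in>ksub A (Suc k). F T) = (\<Sum>b\<in>A. \<Sum>T\<in>ksub (A - {b}) k. F (insert b T))"
proof -
  have "(\<Sum>b\<in>A. \<Sum>T\<in>ksub (A - {b}) k. F (insert b T)) = (\<Sum>(b,T)\<in>Sigma A (\<lambda>b. ksub (A - {b}) k). F (insert b T))"
    using A by (subst sum.Sigma) (auto simp: finite_ksub)
  also have "\<dots> = (\<Sum>(T,b)\<in>Sigma (ksub A (Suc k)) (\<lambda>T. T). F T)"
  proof (rule sum.reindex_bij_witness[where i="\<lambda>(T,b). (b, T - {b})" and j="\<lambda>(b,T). (insert b T, b)"])
    fix p assume p: "p \<in> Sigma (ksub A (Suc k)) (\<lambda>T. T)"
    then obtain T b where [simp]: "p = (T,b)" and T: "T \<subseteq> A" "card T = Suc k" "b \<in> T"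
      by (auto simp: ksub_def)
    have "finite T" using T A finite_subset by blast
    thus "(case case p of (T, b) \<Rightarrow> (b, T - {b}) of (b, T) \<Rightarrow> (insert b T, b)) = p"
      using T by auto
    show "(case p of (T, b) \<Rightarrow> (b, T - {b})) \<in> Sigma A (\<lambda>b. ksub (A - {b}) k)"
      using T \<open>finite T\<close> by (auto simp: ksub_def)
  next
    fix p assume p: "p \<in> Sigma A (\<lambda>b. ksub (A - {b}) k)"
    then obtain T b where [simp]: "p = (b,T)" and T: "T \<subseteq> A - {b}" "card T = k" "b \<in> A"
      by (auto simp: ksub_def)
    have "finite T" using T A finite_subset by blast
    thus "(case case p of (b, T) \<Rightarrow> (insert b T, b) of (T, b) \<Rightarrow> (b, T - {b})) = p"
      using T by auto
    show "(case p of (b, T) \<Rightarrow> (insert b T, b)) \<in> Sigma (ksub A (Suc k)) (\<lambda>T. T)"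
      using T \<open>finite T\<close> by (auto simp: ksub_def card_insert_if)
    show "(case case p of (b, T) \<Rightarrow> (insert b T, b) of (T, b) \<Rightarrow> F T) = (case p of (b, T) \<Rightarrow> F (insert b T))"
      by simp
  qed
  also have "\<dots> = (\<Sum>T\<in>ksub A (Suc k). \<Sum>b\<in>T. F T)"
    using A by (subst sum.Sigma) (auto simp: finite_ksub ksub_def dest: finite_subset)
  also have "\<dots> = (\<Sum>T\<in>ksub A (Suc k). real (Suc k) * F T)"
    by (intro sum.cong) (auto simp: ksub_def)
  finally show ?thesis by (simp add: sum_distrib_left)
qed

lemma ksub_mgf:
  fixes a :: "'a \<Rightarrow> real"
  assumes "finite A" "\<forall>i\<in>A. \<bar>a i\<bar> \<le> 1" "k \<le> card A"
  shows "(\<Sum>T\<in>ksub A k. exp (l * (\<Sum>i\<in>T. a i)))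
           \<le> real (card A choose k) * exp (l * k * ((\<Sum>i\<in>A. a i) / card A) + l^2 * k / 2)"
  using assms
proof (induction k arbitrary: A)
  case 0
  have "ksub A 0 = {{}}" using 0 by (auto simp: ksub_def dest: finite_subset)
  thus ?case by simp
next
  case (Suc k)
  note A = Suc.prems(1) and ab = Suc.prems(2)
  define N where "N = card A"
  define S where "S = (\<Sum>i\<in>A. a i)"
  define \<mu> where "\<mu> = S / N"
  have N: "Suc k \<le> N" using Suc.prems N_def by auto
  have Ane: "A \<noteq> {}" using N N_def by auto
  have cardb: "card (A - {b}) = N - 1" if "b \<in> A" for b using that A N_def by simp
  have sumb: "(\<Sum>i\<in>A-{b}. a i) = S - a b" if "b \<in> A" for b 
    using that A S_def by (simp add: sum_diff1)
  have "real (Suc k) * (\<Sum>T\<in>ksub A (Suc k). exp (l * (\<Sum>i\<in>T. a i)))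
      = (\<Sum>b\<in>A. \<Sum>T\<in>ksub (A - {b}) k. exp (l * (\<Sum>i\<in>insert b T. a i)))"
    by (rule ksub_pick[OF A])
  also have "\<dots> = (\<Sum>b\<in>A. exp (l * a b) * (\<Sum>T\<in>ksub (A - {b}) k. exp (l * (\<Sum>i\<in>T. a i))))"
  proof (rule sum.cong[OF refl])
    fix b assume "b \<in> A"
    show "(\<Sum>T\<in>ksub (A - {b}) k. exp (l * (\<Sum>i\<in>insert b T. a i))) = exp (l * a b) * (\<Sum>T\<in>ksub (A - {b}) k. exp (l * (\<Sum>i\<in>T. a i)))"
      unfolding sum_distrib_left[of "exp (l * a b)"]
    proof (rule sum.cong[OF refl])
      fix T assume "T \<in> ksub (A - {b}) k"
      hence "b \<notin> T" "finite T" using A by (auto simp: ksub_def dest: finite_subset)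
      thus "exp (l * (\<Sum>i\<in>insert b T. a i)) = exp (l * a b) * exp (l * (\<Sum>i\<in>T. a i))"
        by (simp add: distrib_left exp_add)
    qed
  qed
  also have "\<dots> \<le> (\<Sum>b\<in>A. exp (l * a b) * (real (N - 1 choose k) *
                   exp (l * k * ((S - a b) / (N - 1)) + l^2 * k / 2)))"
  proof (intro sum_mono mult_left_mono)
    fix b assume b: "b \<in> A"
    have "(\<Sum>T\<in>ksub (A - {b}) k. exp (l * (\<Sum>i\<in>T. a i)))
       \<le> real (card (A - {b}) choose k) * exp (l * k * ((\<Sum>i\<in>A-{b}. a i) / card (A - {b})) + l^2 * k / 2)"
      using A ab N cardb[OF b] by (intro Suc.IH) auto
    also have "\<dots> = real (N - 1 choose k) * exp (l * k * ((S - a b) / (N - 1)) + l^2 * k / 2)"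
      using b N by (simp add: sumb of_nat_diff N_def Suc_le_eq)
    finally show "(\<Sum>T\<in>ksub (A - {b}) k. exp (l * (\<Sum>i\<in>T. a i))) \<le> \<dots>" .
  qed simp
  also have "\<dots> = real (N - 1 choose k) * exp (l^2 * k / 2) *
                   (\<Sum>b\<in>A. exp (l * a b + l * k * ((S - a b) / (N - 1))))"
    by (simp add: sum_distrib_left exp_add mult_ac)
  also have "(\<Sum>b\<in>A. exp (l * a b + l * k * ((S - a b) / (N - 1)))) \<le> N * exp (l * Suc k * \<mu> + l^2/2)"
  proof (cases "k = 0")
    case True
    have "(\<Sum>b\<in>A. exp (l * a b + l * k * ((S - a b) / (N - 1))))
          = exp (l * \<mu>) * (\<Sum>b\<in>A. exp (l * (a b - (\<Sum>j\<in>A. a j) / card A)))"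
      using True by (simp add: sum_distrib_left flip: exp_add) (simp add: S_def \<mu>_def N_def algebra_simps)
    also have "\<dots> \<le> exp (l * \<mu>) * (card A * exp (l^2/2))"
      by (intro mult_left_mono fin_hoeffding A Ane ab) auto
    finally show ?thesis using True by (simp add: N_def exp_add mult_ac)
  next
    case False
    define l' where "l' = l * (real N - 1 - k) / (real N - 1)"
    have N2: "real N - 1 > 0" using N False by simp
    have eq: "l * a b + l * k * ((S - a b) / (N - 1)) = l * Suc k * \<mu> + l' * (a b - \<mu>)" for b
      using N2 N unfolding l'_def \<mu>_def by (simp add: of_nat_diff field_simps)
    have l': "\<bar>l'\<bar> \<le> \<bar>l\<bar>"
    proof -
      have "0 \<le> (real N - 1 - k) / (real N - 1)" "(real N - 1 - k) / (real N - 1) \<le> 1"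
        using N N2 by (auto simp: divide_le_eq)
      hence r: "\<bar>(real N - 1 - k) / (real N - 1)\<bar> \<le> 1" by (intro abs_leI) linarith+
      have "\<bar>l * ((real N - 1 - k) / (real N - 1))\<bar> \<le> \<bar>l\<bar> * 1"
        by (simp only: abs_mult) (rule mult_left_mono[OF r], simp)
      thus ?thesis unfolding l'_def by simp
    qed
    have "(\<Sum>b\<in>A. exp (l * a b + l * k * ((S - a b) / (N - 1))))
          = exp (l * Suc k * \<mu>) * (\<Sum>b\<in>A. exp (l' * (a b - (\<Sum>j\<in>A. a j) / card A)))"
      unfolding eq by (simp add: sum_distrib_left exp_add S_def \<mu>_def N_def)
    also have "\<dots> \<le> exp (l * Suc k * \<mu>) * (card A * exp (l^2/2))"
      by (intro mult_left_mono fin_hoeffding A Ane ab l') auto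
    finally show ?thesis by (simp add: N_def exp_add mult_ac)
  qed
  hence "real (N - 1 choose k) * exp (l^2 * k / 2) * (\<Sum>b\<in>A. exp (l * a b + l * k * ((S - a b) / (N - 1))))
        \<le> real (N - 1 choose k) * exp (l^2 * k / 2) * (N * exp (l * Suc k * \<mu> + l^2/2))"
    by (intro mult_left_mono) auto
  also have "\<dots> = real (Suc k) * (real (N choose Suc k) * exp (l * Suc k * \<mu> + l^2 * Suc k / 2))"
  proof -
    have "real (Suc k) * real (N choose Suc k) = real N * real (N - 1 choose k)"
      by (metis binomial_absorption of_nat_mult)
    moreover have "exp (l^2 * k / 2) * exp (l * Suc k * \<mu> + l^2/2) = exp (l * Suc k * \<mu> + l^2 * Suc k / 2)"
      by (subst exp_add[symmetric]) (simp add: field_simps)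
    ultimately show ?thesis
    proof -
      assume b: "real (Suc k) * real (N choose Suc k) = real N * real (N - 1 choose k)"
         and e: "exp (l^2 * k / 2) * exp (l * Suc k * \<mu> + l^2/2) = exp (l * Suc k * \<mu> + l^2 * Suc k / 2)"
      have "real (N - 1 choose k) * exp (l^2 * k / 2) * (N * exp (l * Suc k * \<mu> + l^2/2))
          = (real N * real (N - 1 choose k)) * (exp (l^2 * k / 2) * exp (l * Suc k * \<mu> + l^2/2))"
        by (simp only: mult_ac)
      also have "\<dots> = (real (Suc k) * real (N choose Suc k)) * exp (l * Suc k * \<mu> + l^2 * Suc k / 2)"
        by (simp only: b e)
      finally show ?thesis by (simp only: mult_ac)
    qed
  qed
  finally have "real (Suc k) * (\<Sum>T\<in>ksub A (Suc k). exp (l * (\<Sum>i\<in>T. a i))) \<le>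
     real (Suc k) * (real (N choose Suc k) * exp (l * Suc k * \<mu> + l^2 * Suc k / 2))" .
  hence "(\<Sum>T\<in>ksub A (Suc k). exp (l * (\<Sum>i\<in>T. a i))) \<le> real (N choose Suc k) * exp (l * Suc k * \<mu> + l^2 * Suc k / 2)"
    by (subst (asm) mult_le_cancel_left_pos) auto
  thus ?case by (simp add: N_def \<mu>_def S_def mult_ac)
qed



definition grp :: "nat \<Rightarrow> nat \<Rightarrow> (nat \<Rightarrow> nat) \<Rightarrow> nat set" where
  "grp n j g = {i. i < n \<and> g i = j}"

lemma finite_est_partitions: "finite (est_partitions n d)"
proof -
  have "inj_on (\<lambda>g. restrict g {..<n}) (est_partitions n d)"
  proof (rule inj_onI)
    fix g g' assume g: "g \<in> est_partitions n d" "g' \<in> est_partitions n d"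
      and eq: "restrict g {..<n} = restrict g' {..<n}"
    show "g = g'"
    proof
      fix i show "g i = g' i"
      proof (cases "i < n")
        case True thus ?thesis using fun_cong[OF eq, of i] by simp
      next
        case False thus ?thesis using g by (auto simp: est_partitions_def)
      qed
    qed
  qed
  moreover have "(\<lambda>g. restrict g {..<n}) ` est_partitions n d \<subseteq> PiE {..<n} (\<lambda>_. {..<d})"
    by (intro image_subsetI PiE_I) (auto simp: est_partitions_def)
  hence "finite ((\<lambda>g. restrict g {..<n}) ` est_partitions n d)"
    by (rule finite_subset) (intro finite_PiE, auto)
  ultimately show ?thesis using finite_imageD by blast
qed

lemma div_eq_iff_nat: "0 < (k::nat) \<Longrightarrow> (i div k = j) = (j*k \<le> i \<and> i < j*k+k)"
  by (metis add_diff_inverse_nat diff_add_inverse2 div_less_iff_less_mult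
    div_times_less_eq_dividend le_less_Suc_eq less_eq_div_iff_mult_less_eq
    mult_Suc not_add_less2)

lemma est_partitions_nonempty:
  assumes d: "0 < d" and dvd: "d dvd n"
  shows "est_partitions n d \<noteq> {}"
proof -
  define k where "k = n div d"
  have n: "n = k * d" using dvd k_def by simp
  define g0 where "g0 = (\<lambda>i. if i < n then i div k else 0)"
  have "g0 \<in> est_partitions n d"
    unfolding est_partitions_def
  proof (intro CollectI conjI allI impI)
    fix i assume "i < n"
    thus "g0 i < d" unfolding g0_def n by (metis less_mult_imp_div_less mult.commute)
  next
    fix i assume "n \<le> i" thus "g0 i = 0" by (simp add: g0_def)
  next
    fix j assume j: "j < d"
    have "{i. i < n \<and> g0 i = j} = {j*k..<j*k+k}"
    proof (cases "k = 0")
      case True thus ?thesis using n by simp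
    next
      case False
      have "Suc j * k \<le> d * k" using j by (intro mult_right_mono) auto
      thus ?thesis using False unfolding g0_def n
        by (auto simp: div_eq_iff_nat mult.commute[of k d]) 
    qed
    thus "card {i. i < n \<and> g0 i = j} = n div d" using k_def by simp
  qed
  thus ?thesis by blast
qed

lemma perm_exists:
  fixes n :: nat
  assumes T: "T \<in> ksub {..<n} k" and T': "T' \<in> ksub {..<n} k"
  shows "\<exists>\<pi>. bij_betw \<pi> {..<n} {..<n} \<and> (\<forall>i. n \<le> i \<longrightarrow> \<pi> i = i) \<and> (\<forall>i<n. \<pi> i \<in> T \<longleftrightarrow> i \<in> T')"
proof -
  have fT0: "T \<subseteq> {..<n}" "T' \<subseteq> {..<n}" "card T = k" "card T' = k"
    using T T' by (auto simp: ksub_def)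
  have fT: "finite T" "finite T'" "T \<subseteq> {..<n}" "T' \<subseteq> {..<n}" "card T = k" "card T' = k"
    using fT0 finite_subset[OF fT0(1)] finite_subset[OF fT0(2)] by auto
  obtain h1 where h1: "bij_betw h1 T' T" using finite_same_card_bij[of T' T] fT by auto
  have "card ({..<n} - T') = card ({..<n} - T)" using fT by (simp add: card_Diff_subset)
  then obtain h2 where h2: "bij_betw h2 ({..<n} - T') ({..<n} - T)"
    using finite_same_card_bij[of "{..<n} - T'" "{..<n} - T"] by auto
  define \<pi> where "\<pi> = (\<lambda>i. if i \<in> T' then h1 i else if i < n then h2 i else i)"
  have b1: "bij_betw \<pi> T' T" using h1 by (rule bij_betw_cong[THEN iffD1, rotated]) (auto simp: \<pi>_def)
  have b2: "bij_betw \<pi> ({..<n} - T') ({..<n} - T)"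
    using h2 by (rule bij_betw_cong[THEN iffD1, rotated]) (auto simp: \<pi>_def)
  have "bij_betw \<pi> (T' \<union> ({..<n} - T')) (T \<union> ({..<n} - T))"
    by (rule bij_betw_combine[OF b1 b2]) auto
  moreover have "T' \<union> ({..<n} - T') = {..<n}" "T \<union> ({..<n} - T) = {..<n}" using fT by auto
  ultimately have b: "bij_betw \<pi> {..<n} {..<n}" by simp
  have "\<pi> i \<in> T \<longleftrightarrow> i \<in> T'" if "i < n" for i
  proof (cases "i \<in> T'")
    case True thus ?thesis using b1 by (auto simp: bij_betw_def)
  next
    case False
    hence "i \<in> {..<n} - T'" using that by auto
    hence "\<pi> i \<in> {..<n} - T" using b2 by (auto simp: bij_betw_def)
    thus ?thesis using False by auto
  qed
  moreover have "\<forall>i. n \<le> i \<longrightarrow> \<pi> i = i" using fT by (auto simp: \<pi>_def)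
  ultimately show ?thesis using b by blast
qed

lemma fiber_card_le:
  assumes T: "T \<in> ksub {..<n} k" and T': "T' \<in> ksub {..<n} k" and j: "j < d"
  shows "card {g \<in> est_partitions n d. grp n j g = T} \<le> card {g \<in> est_partitions n d. grp n j g = T'}"
proof -
  obtain \<pi> where b: "bij_betw \<pi> {..<n} {..<n}" and out: "\<forall>i. n \<le> i \<longrightarrow> \<pi> i = i"
    and iff: "\<forall>i<n. \<pi> i \<in> T \<longleftrightarrow> i \<in> T'"
    using perm_exists[OF T T'] by blast
  have lt: "\<pi> i < n" if "i < n" for i using b that by (auto simp: bij_betw_def)
  have surj: "\<exists>y. x = \<pi> y" for x
  proof (cases "x < n")
    case True
    hence "x \<in> \<pi> ` {..<n}" using b by (auto simp: bij_betw_def)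
    thus ?thesis by auto
  next
    case False thus ?thesis using out by (intro exI[of _ x]) auto
  qed
  have inj: "inj_on \<pi> {..<n}" using b by (auto simp: bij_betw_def)
  have T'sub: "T' \<subseteq> {..<n}" using T' by (auto simp: ksub_def)
  show ?thesis
  proof (rule card_inj_on_le[where f="\<lambda>g. g \<circ> \<pi>"])
    show "inj_on (\<lambda>g. g \<circ> \<pi>) {g \<in> est_partitions n d. grp n j g = T}"
    proof (rule inj_onI)
      fix g g' assume "g \<circ> \<pi> = g' \<circ> \<pi>"
      hence "g (\<pi> y) = g' (\<pi> y)" for y by (metis comp_apply)
      thus "g = g'" using surj by (metis ext)
    qed
  next
    show "finite {g \<in> est_partitions n d. grp n j g = T'}" using finite_est_partitions by simp
  next
    show "(\<lambda>g. g \<circ> \<pi>) ` {g \<in> est_partitions n d. grp n j g = T} \<subseteq> {g \<in> est_partitions n d. grp n j g = T'}"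
    proof (rule image_subsetI)
      fix g assume "g \<in> {g \<in> est_partitions n d. grp n j g = T}"
      hence g: "g \<in> est_partitions n d" and G: "grp n j g = T" by auto
      have "g \<circ> \<pi> \<in> est_partitions n d" unfolding est_partitions_def
      proof (intro CollectI conjI allI impI)
        fix i assume "i < n" thus "(g \<circ> \<pi>) i < d" using g lt by (auto simp: est_partitions_def)
      next
        fix i assume "n \<le> i" thus "(g \<circ> \<pi>) i = 0" using g out by (auto simp: est_partitions_def)
      next
        fix j' assume j': "j' < d"
        have "\<pi> ` {i. i < n \<and> (g \<circ> \<pi>) i = j'} = {i. i < n \<and> g i = j'}"
        proof
          show "\<pi> ` {i. i < n \<and> (g \<circ> \<pi>) i = j'} \<subseteq> {i. i < n \<and> g i = j'}" using lt by auto
        next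
          show "{i. i < n \<and> g i = j'} \<subseteq> \<pi> ` {i. i < n \<and> (g \<circ> \<pi>) i = j'}"
          proof safe
            fix x assume x: "x < n" "j' = g x"
            have "x \<in> \<pi> ` {..<n}" using b x by (simp add: bij_betw_def)
            then obtain y where y: "y < n" "\<pi> y = x" by auto
            thus "x \<in> \<pi> ` {i. i < n \<and> (g \<circ> \<pi>) i = g x}" by auto
          qed
        qed
        moreover have "inj_on \<pi> {i. i < n \<and> (g \<circ> \<pi>) i = j'}" by (rule inj_on_subset[OF inj]) auto
        ultimately have "card {i. i < n \<and> (g \<circ> \<pi>) i = j'} = card {i. i < n \<and> g i = j'}"
          by (metis card_image)
        thus "card {i. i < n \<and> (g \<circ> \<pi>) i = j'} = n div d" using g j' by (auto simp: est_partitions_def)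
      qed
      moreover have "grp n j (g \<circ> \<pi>) = T'"
      proof -
        have "grp n j (g \<circ> \<pi>) = {i. i < n \<and> \<pi> i \<in> T}"
          using G lt unfolding grp_def by auto
        also have "\<dots> = T'" using iff T'sub by auto
        finally show ?thesis .
      qed
      ultimately show "g \<circ> \<pi> \<in> {g \<in> est_partitions n d. grp n j g = T'}" by simp
    qed
  qed
qed

lemma grp_in_ksub:
  assumes "g \<in> est_partitions n d" "j < d"
  shows "grp n j g \<in> ksub {..<n} (n div d)"
  using assms by (auto simp: ksub_def grp_def est_partitions_def)

lemma sum_partitions_ksub:
  fixes F :: "nat set \<Rightarrow> real"
  assumes d: "0 < d" and dvd: "d dvd n" and j: "j < d"
  shows "(\<Sum>g\<in>est_partitions n d. F (grp n j g)) * real (n choose (n div d))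
         = real (card (est_partitions n d)) * (\<Sum>T\<in>ksub {..<n} (n div d). F T)"
proof -
  define P where "P = est_partitions n d"
  define K where "K = ksub {..<n} (n div d)"
  define fib where "fib = (\<lambda>T. card {g \<in> P. grp n j g = T})"
  have finP: "finite P" using finite_est_partitions P_def by simp
  have finK: "finite K" using finite_ksub K_def by auto
  have img: "(grp n j) ` P \<subseteq> K" using grp_in_ksub j P_def K_def by auto
  obtain g0 where g0: "g0 \<in> P" using est_partitions_nonempty[OF d dvd] P_def by auto
  define T0 where "T0 = grp n j g0"
  have T0: "T0 \<in> K" using img g0 T0_def by auto
  have fibc: "fib T = fib T0" if "T \<in> K" for T
  proof -
    have "fib T \<le> fib T0" "fib T0 \<le> fib T"
      using fiber_card_le[OF _ _ j] that T0 unfolding fib_def K_def P_def by blast+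
    thus ?thesis by simp
  qed
  have "(\<Sum>g\<in>P. F (grp n j g)) = (\<Sum>T\<in>K. \<Sum>g\<in>{g \<in> P. grp n j g = T}. F (grp n j g))"
    by (rule sum.group[symmetric, OF finP finK img])
  also have "\<dots> = (\<Sum>T\<in>K. real (fib T0) * F T)"
  proof (rule sum.cong[OF refl])
    fix T assume "T \<in> K"
    hence c: "card {g \<in> P. grp n j g = T} = fib T0" using fibc[of T] by (simp add: fib_def)
    have "(\<Sum>g\<in>{g \<in> P. grp n j g = T}. F (grp n j g)) = (\<Sum>g\<in>{g \<in> P. grp n j g = T}. F T)"
      by (rule sum.cong) auto
    thus "(\<Sum>g\<in>{g \<in> P. grp n j g = T}. F (grp n j g)) = real (fib T0) * F T" using c by simp
  qed
  finally have 1: "(\<Sum>g\<in>P. F (grp n j g)) = real (fib T0) * (\<Sum>T\<in>K. F T)" by (simp add: sum_distrib_left)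
  have "card P = (\<Sum>g\<in>P. 1::nat)" by simp
  also have "\<dots> = (\<Sum>T\<in>K. \<Sum>g\<in>{g \<in> P. grp n j g = T}. 1)"
    by (rule sum.group[symmetric, OF finP finK img])
  also have "\<dots> = (\<Sum>T\<in>K. fib T0)"
  proof (rule sum.cong[OF refl])
    fix T assume "T \<in> K"
    thus "(\<Sum>g\<in>{g \<in> P. grp n j g = T}. 1) = fib T0" using fibc[of T] by (simp add: fib_def)
  qed
  also have "\<dots> = fib T0 * (n choose (n div d))" using K_def by (simp add: n_subsets ksub_def)
  finally have 2: "card P = fib T0 * (n choose (n div d))" .
  show ?thesis unfolding P_def[symmetric] K_def[symmetric] 1 2 by simp
qed



lemma part_chernoff:
  fixes a :: "nat \<Rightarrow> real"
  assumes d: "0 < d" and dvd: "d dvd n" and j: "j < d" and n: "0 < n"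
    and ab: "\<forall>i<n. \<bar>a i\<bar> \<le> 1" and t: "0 < t"
  shows "real (card {g \<in> est_partitions n d. (\<Sum>i\<in>grp n j g. a i) \<ge> real (n div d) * ((\<Sum>i<n. a i) / n) + t})
         \<le> real (card (est_partitions n d)) * exp (- (t\<^sup>2) / (2 * real (n div d)))"
proof -
  define P where "P = est_partitions n d"
  define k where "k = n div d"
  define \<mu> where "\<mu> = (\<Sum>i<n. a i) / n"
  define S where "S = (\<lambda>g. \<Sum>i\<in>grp n j g. a i)"
  have k: "0 < k" using d dvd n k_def by (auto elim!: dvdE)
  have kn: "k \<le> n" using k_def by simp
  define l where "l = t / k"
  have l: "0 < l" using t k l_def by simp
  have finP: "finite P" using P_def finite_est_partitions by simp
  have "real (card {g \<in> P. S g \<ge> k * \<mu> + t}) = (\<Sum>g\<in>P. if S g \<ge> k * \<mu> + t then 1 else 0)"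
    using finP by (simp add: sum.If_cases Int_def)
  also have "\<dots> \<le> (\<Sum>g\<in>P. exp (l * (S g - k * \<mu> - t)))"
  proof (intro sum_mono)
    fix g show "(if S g \<ge> k * \<mu> + t then 1 else 0) \<le> exp (l * (S g - k * \<mu> - t))"
      using l by (auto intro: order.trans[OF _ one_le_exp_iff[THEN iffD2]])
  qed
  also have "\<dots> = exp (- l * (k * \<mu> + t)) * (\<Sum>g\<in>P. exp (l * S g))"
    by (simp add: sum_distrib_left flip: exp_add) (simp add: algebra_simps)
  also have "(\<Sum>g\<in>P. exp (l * S g)) \<le> card P * exp (l * k * \<mu> + l^2 * k / 2)"
  proof -
    have "(\<Sum>g\<in>P. exp (l * S g)) * real (n choose k) = card P * (\<Sum>T\<in>ksub {..<n} k. exp (l * (\<Sum>i\<in>T. a i)))"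
      unfolding P_def k_def S_def by (rule sum_partitions_ksub[OF d dvd j])
    also have "\<dots> \<le> card P * (real (n choose k) * exp (l * k * \<mu> + l^2 * k / 2))"
      using ab kn by (intro mult_left_mono) (auto simp: \<mu>_def intro!: ksub_mgf[of "{..<n}", simplified])
    finally have "(\<Sum>g\<in>P. exp (l * S g)) * real (n choose k) \<le> (card P * exp (l * k * \<mu> + l^2 * k / 2)) * real (n choose k)"
      by (simp add: mult_ac)
    moreover have "real (n choose k) > 0" using kn by simp
    ultimately show ?thesis by (simp only: mult_le_cancel_right_pos)
  qed
  hence "exp (- l * (k * \<mu> + t)) * (\<Sum>g\<in>P. exp (l * S g)) \<le> exp (- l * (k * \<mu> + t)) * (card P * exp (l * k * \<mu> + l^2 * k / 2))"
    by (intro mult_left_mono) auto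
  also have "\<dots> = card P * exp (- (t\<^sup>2) / (2 * k))"
  proof -
    have "- l * (k * \<mu> + t) + (l * k * \<mu> + l^2 * k / 2) = - (t\<^sup>2) / (2 * k)"
      using k unfolding l_def by (simp add: field_simps power2_eq_square)
    thus ?thesis by (simp add: mult_ac flip: exp_add)
  qed
  finally show ?thesis unfolding P_def S_def k_def \<mu>_def by simp
qed



lemma rr_scale_ge1: "0 < \<epsilon> \<Longrightarrow> 1 \<le> rr_scale \<epsilon>"
  unfolding rr_scale_def by (simp add: divide_simps)

lemma set_RR: "set_pmf (RR \<epsilon> b) \<subseteq> {b * rr_scale \<epsilon>, - b * rr_scale \<epsilon>}"
  unfolding RR_def by auto

lemma set_est_randomizer: "set_pmf (est_randomizer \<epsilon> v) \<subseteq> {rr_scale \<epsilon>, - rr_scale \<epsilon>}"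
  unfolding est_randomizer_def using set_RR by (fastforce simp: set_bind_pmf)

lemma expectation_RR:
  assumes "0 < \<epsilon>"
  shows "measure_pmf.expectation (RR \<epsilon> b) (\<lambda>y. y) = b"
proof -
  define e where "e = exp \<epsilon>"
  have e: "e > 1" using assms e_def by simp
  have p: "0 \<le> e / (e + 1)" "e / (e + 1) \<le> 1" using e by auto
  have 1: "measure_pmf.expectation (RR \<epsilon> b) (\<lambda>y. y) = b * rr_scale \<epsilon> * (e / (e + 1)) + (- b * rr_scale \<epsilon>) * (1 - e / (e + 1))"
    unfolding RR_def integral_map_pmf e_def[symmetric] using p by (simp add: integral_bernoulli_pmf)
  have "b * rr_scale \<epsilon> * (e / (e + 1)) + (- b * rr_scale \<epsilon>) * (1 - e / (e + 1))
      = b * (rr_scale \<epsilon> * ((e - 1) / (e + 1)))"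
  proof -
    have ep: "e + 1 \<noteq> 0" using e by simp
    have X: "b*r*A + (-b*r)*(1 - A) = b*(r*(A - (1 - A)))" for A r :: real by (simp add: algebra_simps)
    have "(e - 1) / (e + 1) = e/(e+1) - (1 - e/(e+1))" using ep by (smt (verit, ccfv_threshold) diff_diff_eq diff_divide_distrib div_self)
    thus ?thesis by (simp only: X)
  qed
  also have "rr_scale \<epsilon> * ((e - 1) / (e + 1)) = 1"
    using e unfolding rr_scale_def e_def[symmetric] by simp
  finally show ?thesis using 1 by simp
qed

lemma expectation_est_randomizer:
  assumes "0 < \<epsilon>" "\<bar>v\<bar> \<le> 1"
  shows "measure_pmf.expectation (est_randomizer \<epsilon> v) (\<lambda>y. y) = v"
proof -
  have q: "0 \<le> 1/2 + v/2" "1/2 + v/2 \<le> 1" using assms by (auto simp: abs_le_iff)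
  have fin: "finite (set_pmf (RR \<epsilon> b))" for b by (rule finite_subset[OF set_RR]) auto
  have "measure_pmf.expectation (est_randomizer \<epsilon> v) (\<lambda>y. y) = 
     (\<Sum>b\<in>UNIV. pmf (bernoulli_pmf (1/2 + v/2)) b *\<^sub>R measure_pmf.expectation (RR \<epsilon> (if b then 1 else -1)) (\<lambda>y. y))"
    unfolding est_randomizer_def by (rule pmf_expectation_bind) (auto simp: fin)
  also have "\<dots> = v" using q assms(1) by (simp add: UNIV_bool expectation_RR)
  finally show ?thesis .
qed



lemma hoeffding_Pi:
  fixes Q :: "nat \<Rightarrow> real pmf"
  assumes A: "finite A" and I: "I \<subseteq> A" "I \<noteq> {}" and sup: "\<forall>i\<in>I. set_pmf (Q i) \<subseteq> {-r..r}"
    and mu: "\<forall>i\<in>I. measure_pmf.expectation (Q i) (\<lambda>v. v) = mu i" and t: "0 \<le> t" and r: "0 < r"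
  shows "measure_pmf.prob (Pi_pmf A 0 Q) {y. \<bar>(\<Sum>i\<in>I. y i) - (\<Sum>i\<in>I. mu i)\<bar> \<ge> t}
           \<le> 2 * exp (- 2 * t\<^sup>2 / (real (card I) * (2 * r)\<^sup>2))"
proof -
  have finI: "finite I" using A I finite_subset by blast
  have ind0: "prob_space.indep_vars (measure_pmf (Pi_pmf A 0 Q)) (\<lambda>_. count_space UNIV) (\<lambda>x f. f x) I"
    by (rule prob_space.indep_vars_subset[OF measure_pmf.prob_space_axioms indep_vars_Pi_pmf[OF A] I(1)])
  have ind: "prob_space.indep_vars (measure_pmf (Pi_pmf A 0 Q)) (\<lambda>_. borel) (\<lambda>x f. f x) I"
    using prob_space.indep_vars_compose2[OF measure_pmf.prob_space_axioms ind0, of "\<lambda>_ v. v" "\<lambda>_. borel"]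
    by simp
  have E: "measure_pmf.expectation (Pi_pmf A 0 Q) (\<lambda>f. f i) = mu i" if "i \<in> I" for i
  proof -
    have "measure_pmf.expectation (Pi_pmf A 0 Q) (\<lambda>f. f i) = measure_pmf.expectation (map_pmf (\<lambda>f. f i) (Pi_pmf A 0 Q)) (\<lambda>v. v)"
      by (simp add: integral_map_pmf)
    also have "\<dots> = measure_pmf.expectation (Q i) (\<lambda>v. v)" using that I by (subst Pi_pmf_component[OF A]) auto
    finally show ?thesis using mu that by simp
  qed
  interpret H: Hoeffding_ineq "measure_pmf (Pi_pmf A 0 Q)" I "\<lambda>x f. f x" "\<lambda>_. -r" "\<lambda>_. r" "\<Sum>i\<in>I. mu i"
  proof unfold_locales
    show "finite I" by fact
    show "prob_space.indep_vars (measure_pmf (Pi_pmf A 0 Q)) (\<lambda>_. borel) (\<lambda>x f. f x) I" by fact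
  next
    fix i assume i: "i \<in> I"
    show "AE x in measure_pmf (Pi_pmf A 0 Q). x i \<in> {- r..r}"
    proof (rule AE_pmfI)
      fix y assume "y \<in> set_pmf (Pi_pmf A 0 Q)"
      hence "y i \<in> set_pmf (Q i)" using i I A by (auto simp: set_Pi_pmf PiE_dflt_def)
      thus "y i \<in> {-r..r}" using sup i by blast
    qed
  next
    show "(\<Sum>i\<in>I. mu i) \<equiv> \<Sum>i\<in>I. measure_pmf.expectation (Pi_pmf A 0 Q) (\<lambda>f. f i)"
      using E by simp
  qed
  have "(\<Sum>i\<in>I. (r - - r)\<^sup>2) = real (card I) * (2 * r)\<^sup>2" by simp
  moreover have "real (card I) * (2 * r)\<^sup>2 > 0" using finI I r by (simp add: card_gt_0_iff)
  ultimately show ?thesis using H.Hoeffding_ineq_abs_ge[OF t] by simp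
qed



lemma combine_bound:
  fixes D SIy SIx SHy SHx h t1 t2 km K mean rr c0 s mn :: real
  assumes "\<bar>SIy - SIx\<bar> < t1" "\<bar>SHy - SHx\<bar> \<le> 2*rr*h" "h < km + t2" "\<bar>SIx + SHx - K\<bar> < t2"
    "D*t1 = c0*rr* s" "D*t2 = c0* s" "D*km = mn" "D*K = mean" "D > 0" "rr \<ge> 1" "c0 \<ge> 0" "s \<ge> 0" "mn \<ge> 0"
  shows "\<bar>D*(SIy+SHy) - mean\<bar> < (4*c0+2)*rr*(s + mn)"
proof -
  have "D*(SIy+SHy) - mean = D*((SIy - SIx) + (SHy - SHx) + (SIx + SHx - K))"
    using assms by (simp add: algebra_simps)
  hence "\<bar>D*(SIy+SHy) - mean\<bar> \<le> D*(\<bar>SIy - SIx\<bar> + \<bar>SHy - SHx\<bar> + \<bar>SIx + SHx - K\<bar>)"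
    using assms by (simp add: abs_mult)
  also have "\<dots> < D*(t1 + 2*rr*(km + t2) + t2)"
  proof -
    have "2*rr*h \<le> 2*rr*(km+t2)" using assms by (intro mult_left_mono) auto
    hence X: "\<bar>SIy - SIx\<bar> + \<bar>SHy - SHx\<bar> + \<bar>SIx + SHx - K\<bar> < t1 + 2*rr*(km + t2) + t2"
      using assms(1,2,4) by linarith
    show ?thesis using assms(9) by (intro mult_strict_left_mono X)
  qed
  also have "\<dots> = D*t1 + 2*rr*(D*km) + 2*rr*(D*t2) + D*t2" by (simp add: algebra_simps)
  also have "\<dots> = c0*rr* s + 2*rr*mn + 2*rr*(c0* s) + c0* s"
    by (simp only: assms(5,6,7))
  also have "\<dots> \<le> (4*c0+2)*rr*(s + mn)"
  proof -
    have cs: "0 \<le> c0* s" using assms by simp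
    have "c0* s \<le> rr*(c0* s)" using mult_right_mono[OF assms(10) cs] by simp
    moreover have "0 \<le> rr*(c0* s)" "0 \<le> rr * mn" "0 \<le> rr * s" "0 \<le> c0 * (mn * rr)" using assms by auto
    ultimately show ?thesis by (simp add: algebra_simps)
  qed
  finally show ?thesis .
qed



lemma prob_le_via_support:
  assumes "A \<inter> set_pmf p \<subseteq> B"
  shows "measure_pmf.prob p A \<le> measure_pmf.prob p B"
proof -
  have "measure_pmf.prob p A = measure_pmf.prob p (A \<inter> set_pmf p)" by (simp add: measure_Int_set_pmf)
  also have "\<dots> \<le> measure_pmf.prob p B" using assms by (intro measure_pmf.finite_measure_mono) auto
  finally show ?thesis .
qed

lemma sqrt_scale:
  fixes D k L :: real
  assumes "D * k = 1" "0 < D" "0 \<le> L"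
  shows "D * sqrt (k * L) = sqrt (D * L)"
proof -
  have "D * sqrt (k * L) = sqrt (D^2) * sqrt (k * L)" using assms by simp
  also have "\<dots> = sqrt (D^2 * (k * L))" by (simp add: real_sqrt_mult)
  also have "D^2 * (k * L) = D * L" using assms(1) by (simp add: power2_eq_square algebra_simps)
  finally show ?thesis .
qed

lemma y_side:
  fixes \<epsilon> \<beta> c0 :: real and d m n :: nat and x :: "nat \<Rightarrow> nat \<Rightarrow> real" and g :: "nat \<Rightarrow> nat"
    and C :: "nat set" and f :: "(nat \<Rightarrow> nat) \<Rightarrow> nat \<Rightarrow> real"
  assumes eps: "0 < \<epsilon>" and d: "0 < d" and dvd: "d dvd n" and n: "0 < n"
    and xb: "\<forall>i<n. \<forall>j<d. \<bar>x i j\<bar> \<le> 1"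
    and g: "g \<in> est_partitions n d" and C: "C \<subseteq> {..<n}" "card C = m"
    and fC: "\<forall>i\<in>C. f g i \<in> {rr_scale \<epsilon>, - rr_scale \<epsilon>}"
    and c0: "0 < c0" and L: "0 < ln (real d / \<beta>)"
    and good: "\<forall>j<d. (\<Sum>i\<in>{i. i < n \<and> g i = j}. (if i \<in> C then 1 else 0)) < real (n div d) * ((\<Sum>i<n. (if i \<in> C then 1 else 0)) / n) + c0 * sqrt (real (n div d) * ln (real d / \<beta>))
              \<and> (\<Sum>i\<in>{i. i < n \<and> g i = j}. x i j) < real (n div d) * ((\<Sum>i<n. x i j) / n) + c0 * sqrt (real (n div d) * ln (real d / \<beta>))
              \<and> (\<Sum>i\<in>{i. i < n \<and> g i = j}. - x i j) < real (n div d) * ((\<Sum>i<n. - x i j) / n) + c0 * sqrt (real (n div d) * ln (real d / \<beta>))"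
  shows "measure_pmf.prob (Pi_pmf {..<n} 0 (\<lambda>i. if i \<in> C then return_pmf (f g i) else est_randomizer \<epsilon> (x i (g i))))
           {y. \<not> ((MAX j\<in>{..<d}. \<bar>(if j < d then real d / real n * (\<Sum>i\<in>{i. i < n \<and> g i = j}. y i) else 0) - (1 / real n) * (\<Sum>i<n. x i j)\<bar>)
               < (4 * c0 + 2) * rr_scale \<epsilon> * (sqrt (real d / real n * ln (real d / \<beta>)) + real m / real n))}
         \<le> real d * (2 * exp (- (c0\<^sup>2) * ln (real d / \<beta>) / 2))"
proof -
  define Q where "Q = (\<lambda>i. if i \<in> C then return_pmf (f g i) else est_randomizer \<epsilon> (x i (g i)))"
  define Y where "Y = Pi_pmf {..<n} 0 Q"
  define rr where "rr = rr_scale \<epsilon>"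
  define k where "k = n div d"
  define L where "L = ln (real d / \<beta>)"
  define s where "s = sqrt (real d / real n * L)"
  define t1 where "t1 = c0 * rr * sqrt (k * L)"
  define t2 where "t2 = c0 * sqrt (k * L)"
  define E0 where "E0 = exp (- (c0\<^sup>2) * L / 2)"
  define G where "G = (\<lambda>j. {i. i < n \<and> g i = j})"
  define I where "I = (\<lambda>j. G j - C)"
  define B where "B = (\<lambda>j. {y. \<bar>(\<Sum>i\<in>I j. y i) - (\<Sum>i\<in>I j. x i j)\<bar> \<ge> t1})"
  have rr: "1 \<le> rr" using rr_scale_ge1[OF eps] rr_def by simp
  have nk: "n = k * d" using dvd k_def by simp
  have k: "0 < k" using nk n by (cases k) auto
  have Dk: "real d / real n * real k = 1" using nk k d by simp
  have Lpos: "0 < L" using L L_def by simp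
  have t1: "0 < t1" unfolding t1_def using c0 rr k Lpos by simp
  have finG: "finite (G j)" for j unfolding G_def by simp
  have cardG: "card (G j) = k" if "j < d" for j using g that unfolding G_def k_def est_partitions_def by auto
  have supY: "y i \<in> {rr, -rr}" if "y \<in> set_pmf Y" "i < n" for y i
  proof -
    have "y i \<in> set_pmf (Q i)" using that by (auto simp: Y_def set_Pi_pmf PiE_dflt_def)
    thus ?thesis using fC set_est_randomizer[of \<epsilon> "x i (g i)"] unfolding Q_def rr_def
      by (auto split: if_splits)
  qed
  have probB: "measure_pmf.prob Y (B j) \<le> 2 * E0" if j: "j < d" for j
  proof (cases "I j = {}")
    case True
    hence "B j = {}" using t1 unfolding B_def by auto
    thus ?thesis unfolding E0_def by simp
  next
    case False
    have IG: "I j \<subseteq> G j" unfolding I_def by auto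
    have cI: "card (I j) \<le> k" using card_mono[OF finG IG] cardG[OF j] by simp
    have cI0: "0 < card (I j)" using False finite_subset[OF IG finG] by (simp add: card_gt_0_iff)
    have "measure_pmf.prob Y (B j) \<le> 2 * exp (- 2 * t1\<^sup>2 / (real (card (I j)) * (2 * rr)\<^sup>2))"
      unfolding Y_def B_def
    proof (rule hoeffding_Pi)
      show "I j \<subseteq> {..<n}" unfolding I_def G_def by auto
      show "\<forall>i\<in>I j. set_pmf (Q i) \<subseteq> {- rr..rr}"
        using set_est_randomizer rr unfolding Q_def I_def rr_def by fastforce
      show "\<forall>i\<in>I j. measure_pmf.expectation (Q i) (\<lambda>v. v) = x i j"
        using expectation_est_randomizer[OF eps] xb j unfolding Q_def I_def G_def by auto
    qed (use False t1 rr in auto)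
    also have "\<dots> \<le> 2 * E0"
    proof -
      have "- 2 * t1\<^sup>2 / (real (card (I j)) * (2 * rr)\<^sup>2) = - (c0\<^sup>2 * L / 2) * (k / card (I j))"
        unfolding t1_def using rr k Lpos cI0 by (simp add: power_mult_distrib field_simps)
      also have "\<dots> \<le> - (c0\<^sup>2 * L / 2) * 1"
        using cI cI0 Lpos by (intro mult_left_mono_neg) (auto simp: field_simps)
      finally show ?thesis unfolding E0_def by simp
    qed
    finally show ?thesis .
  qed
  have incl: "{y. \<not> ((MAX j\<in>{..<d}. \<bar>(if j < d then real d / real n * (\<Sum>i\<in>{i. i < n \<and> g i = j}. y i) else 0) - (1 / real n) * (\<Sum>i<n. x i j)\<bar>)
               < (4 * c0 + 2) * rr_scale \<epsilon> * (sqrt (real d / real n * ln (real d / \<beta>)) + real m / real n))} \<inter> set_pmf Y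
         \<subseteq> (\<Union>j\<in>{..<d}. B j)"
  proof (rule subsetI, rule ccontr)
    fix y assume y: "y \<in> {y. \<not> ((MAX j\<in>{..<d}. \<bar>(if j < d then real d / real n * (\<Sum>i\<in>{i. i < n \<and> g i = j}. y i) else 0) - (1 / real n) * (\<Sum>i<n. x i j)\<bar>)
               < (4 * c0 + 2) * rr_scale \<epsilon> * (sqrt (real d / real n * ln (real d / \<beta>)) + real m / real n))} \<inter> set_pmf Y"
      and nB: "y \<notin> (\<Union>j\<in>{..<d}. B j)"
    have "(MAX j\<in>{..<d}. \<bar>(if j < d then real d / real n * (\<Sum>i\<in>{i. i < n \<and> g i = j}. y i) else 0) - (1 / real n) * (\<Sum>i<n. x i j)\<bar>)
               < (4 * c0 + 2) * rr * (s + real m / real n)"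
    proof (subst Max_less_iff, simp, use d in simp, safe)
      fix j assume j: "j < d"
      define H where "H = G j \<inter> C"
      have HG: "H \<subseteq> G j" and IGH: "I j = G j - H" unfolding H_def I_def by auto
      have sy: "(\<Sum>i\<in>G j. y i) = (\<Sum>i\<in>I j. y i) + (\<Sum>i\<in>H. y i)"
        unfolding IGH using sum.subset_diff[OF HG finG] by simp
      have sx: "(\<Sum>i\<in>G j. x i j) = (\<Sum>i\<in>I j. x i j) + (\<Sum>i\<in>H. x i j)"
        unfolding IGH using sum.subset_diff[OF HG finG] by simp
      have "y \<notin> B j" using nB j by blast
      hence yI: "\<bar>(\<Sum>i\<in>I j. y i) - (\<Sum>i\<in>I j. x i j)\<bar> < t1" unfolding B_def by simp
      have yH: "\<bar>(\<Sum>i\<in>H. y i) - (\<Sum>i\<in>H. x i j)\<bar> \<le> 2 * rr * real (card H)"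
      proof -
        have "\<bar>(\<Sum>i\<in>H. y i) - (\<Sum>i\<in>H. x i j)\<bar> = \<bar>\<Sum>i\<in>H. y i - x i j\<bar>" by (simp add: sum_subtractf)
        also have "\<dots> \<le> (\<Sum>i\<in>H. \<bar>y i - x i j\<bar>)" by (rule sum_abs)
        also have "\<dots> \<le> (\<Sum>i\<in>H. 2 * rr)"
        proof (rule sum_mono)
          fix i assume "i \<in> H"
          hence i: "i < n" unfolding H_def G_def by auto
          have "y i \<in> {rr, -rr}" using supY[OF _ i] y by auto
          moreover have "\<bar>x i j\<bar> \<le> 1" using xb i j by auto
          ultimately show "\<bar>y i - x i j\<bar> \<le> 2 * rr" using rr by (auto simp: abs_le_iff)
        qed
        finally show ?thesis by (simp add: mult.commute)
      qed
      have hC: "(\<Sum>i\<in>G j. (if i \<in> C then 1 else 0 :: real)) = real (card H)"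
        unfolding H_def by (simp add: sum.If_cases finG Int_def)
      have mC: "(\<Sum>i<n. (if i \<in> C then 1 else 0 :: real)) = real m"
      proof -
        have "{..<n} \<inter> {i. i \<in> C} = C" using C by auto
        thus ?thesis using C by (simp add: sum.If_cases)
      qed
      have g1: "real (card H) < k * (real m / n) + t2" using good j hC mC unfolding t2_def G_def L_def k_def by auto
      have g2: "\<bar>(\<Sum>i\<in>I j. x i j) + (\<Sum>i\<in>H. x i j) - k * ((\<Sum>i<n. x i j) / n)\<bar> < t2"
      proof -
        have a: "(\<Sum>i\<in>G j. x i j) < k * ((\<Sum>i<n. x i j) / n) + t2"
          using good j unfolding t2_def G_def L_def k_def by auto
        have b: "(\<Sum>i\<in>G j. - x i j) < k * ((\<Sum>i<n. - x i j) / n) + t2"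
          using good j unfolding t2_def G_def L_def k_def by auto
        hence b': "- (\<Sum>i\<in>G j. x i j) < - (k * ((\<Sum>i<n. x i j) / n)) + t2" by (simp add: sum_negf)
        show ?thesis using a b' sx by (simp add: abs_less_iff)
      qed
      have e1: "real d / real n * t1 = c0 * rr * s"
        unfolding t1_def s_def using sqrt_scale[OF Dk _ less_imp_le[OF Lpos]] n d by (simp add: mult_ac)
      have e2: "real d / real n * t2 = c0 * s"
        unfolding t2_def s_def using sqrt_scale[OF Dk _ less_imp_le[OF Lpos]] n d by (simp add: mult_ac)
      have e3: "real d / real n * (k * (real m / n)) = real m / n" using Dk by (simp add: mult_ac)
      have e4: "real d / real n * (k * ((\<Sum>i<n. x i j) / n)) = 1 / real n * (\<Sum>i<n. x i j)" using Dk by (simp add: mult_ac)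
      have "\<bar>real d / real n * ((\<Sum>i\<in>I j. y i) + (\<Sum>i\<in>H. y i)) - 1 / real n * (\<Sum>i<n. x i j)\<bar> < (4*c0+2)*rr*(s + real m / n)"
        by (rule combine_bound[OF yI yH g1 g2 e1 e2 e3 e4]) (use n d rr c0 Lpos in \<open>auto simp: s_def\<close>)
      thus "\<bar>(if j < d then real d / real n * (\<Sum>i\<in>{i. i < n \<and> g i = j}. y i) else 0) - 1 / real n * (\<Sum>i<n. x i j)\<bar>
              < (4 * c0 + 2) * rr * (s + real m / real n)"
        using j sy unfolding G_def by simp
    qed (use d in auto)
    thus False using y unfolding s_def L_def rr_def by simp
  qed
  have "measure_pmf.prob Y {y. \<not> ((MAX j\<in>{..<d}. \<bar>(if j < d then real d / real n * (\<Sum>i\<in>{i. i < n \<and> g i = j}. y i) else 0) - (1 / real n) * (\<Sum>i<n. x i j)\<bar>)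
               < (4 * c0 + 2) * rr_scale \<epsilon> * (sqrt (real d / real n * ln (real d / \<beta>)) + real m / real n))}
        \<le> measure_pmf.prob Y (\<Union>j\<in>{..<d}. B j)"
    by (rule prob_le_via_support[OF incl])
  also have "\<dots> \<le> (\<Sum>j\<in>{..<d}. measure_pmf.prob Y (B j))"
    by (rule measure_pmf.finite_measure_subadditive_finite) auto
  also have "\<dots> \<le> (\<Sum>j\<in>{..<d}. 2 * E0)" by (intro sum_mono probB) auto
  also have "\<dots> = real d * (2 * E0)" by simp
  finally show ?thesis unfolding Y_def Q_def E0_def L_def .
qed



lemma part_side:
  fixes \<beta> c0 :: real and d n :: nat and x :: "nat \<Rightarrow> nat \<Rightarrow> real" and C :: "nat set"
  assumes d: "0 < d" and dvd: "d dvd n" and n: "0 < n"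
    and xb: "\<forall>i<n. \<forall>j<d. \<bar>x i j\<bar> \<le> 1"
    and c0: "0 < c0" and L: "0 < ln (real d / \<beta>)"
  shows "real (card {g \<in> est_partitions n d. \<not> (\<forall>j<d. (\<Sum>i\<in>{i. i < n \<and> g i = j}. (if i \<in> C then 1 else 0)) < real (n div d) * ((\<Sum>i<n. (if i \<in> C then 1 else 0)) / n) + c0 * sqrt (real (n div d) * ln (real d / \<beta>))
              \<and> (\<Sum>i\<in>{i. i < n \<and> g i = j}. x i j) < real (n div d) * ((\<Sum>i<n. x i j) / n) + c0 * sqrt (real (n div d) * ln (real d / \<beta>))
              \<and> (\<Sum>i\<in>{i. i < n \<and> g i = j}. - x i j) < real (n div d) * ((\<Sum>i<n. - x i j) / n) + c0 * sqrt (real (n div d) * ln (real d / \<beta>)))})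
      \<le> real (card (est_partitions n d)) * (real d * (3 * exp (- (c0\<^sup>2) * ln (real d / \<beta>) / 2)))"
proof -
  define P where "P = est_partitions n d"
  define k where "k = n div d"
  define L where "L = ln (real d / \<beta>)"
  define t2 where "t2 = c0 * sqrt (real k * L)"
  define E0 where "E0 = exp (- (c0\<^sup>2) * L / 2)"
  have nk: "n = k * d" using dvd k_def by simp
  have k: "0 < k" using nk n by (cases k) auto
  have t2: "0 < t2" unfolding t2_def using c0 k L L_def by simp
  have Et: "exp (- (t2\<^sup>2) / (2 * real k)) = E0"
    unfolding E0_def t2_def using k L L_def by (simp add: power_mult_distrib field_simps)
  define S where "S = (\<lambda>(a :: nat \<Rightarrow> real) j. {g \<in> P. (\<Sum>i\<in>grp n j g. a i) \<ge> real k * ((\<Sum>i<n. a i) / n) + t2})"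
  have cS: "real (card (S a j)) \<le> card P * E0" if "j < d" "\<forall>i<n. \<bar>a i\<bar> \<le> 1" for a j
    using part_chernoff[OF d dvd that(1) n that(2) t2] Et unfolding S_def P_def k_def by simp
  have finP: "finite P" unfolding P_def by (rule finite_est_partitions)
  have sub: "{g \<in> P. \<not> (\<forall>j<d. (\<Sum>i\<in>{i. i < n \<and> g i = j}. (if i \<in> C then 1 else 0)) < real k * ((\<Sum>i<n. (if i \<in> C then 1 else 0)) / n) + t2
              \<and> (\<Sum>i\<in>{i. i < n \<and> g i = j}. x i j) < real k * ((\<Sum>i<n. x i j) / n) + t2
              \<and> (\<Sum>i\<in>{i. i < n \<and> g i = j}. - x i j) < real k * ((\<Sum>i<n. - x i j) / n) + t2)}
     \<subseteq> (\<Union>j\<in>{..<d}. S (\<lambda>i. if i \<in> C then 1 else 0) j \<union> S (\<lambda>i. x i j) j \<union> S (\<lambda>i. - x i j) j)"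
    unfolding S_def grp_def by (auto simp: not_less)
  have "real (card {g \<in> P. \<not> (\<forall>j<d. (\<Sum>i\<in>{i. i < n \<and> g i = j}. (if i \<in> C then 1 else 0)) < real k * ((\<Sum>i<n. (if i \<in> C then 1 else 0)) / n) + t2
              \<and> (\<Sum>i\<in>{i. i < n \<and> g i = j}. x i j) < real k * ((\<Sum>i<n. x i j) / n) + t2
              \<and> (\<Sum>i\<in>{i. i < n \<and> g i = j}. - x i j) < real k * ((\<Sum>i<n. - x i j) / n) + t2)})
     \<le> real (card (\<Union>j\<in>{..<d}. S (\<lambda>i. if i \<in> C then 1 else 0) j \<union> S (\<lambda>i. x i j) j \<union> S (\<lambda>i. - x i j) j))"
    by (intro of_nat_mono card_mono sub) (auto simp: S_def finP)
  also have "\<dots> \<le> real (\<Sum>j\<in>{..<d}. card (S (\<lambda>i. if i \<in> C then 1 else 0) j \<union> S (\<lambda>i. x i j) j \<union> S (\<lambda>i. - x i j) j))"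
    by (intro of_nat_mono card_UN_le) auto
  also have "\<dots> \<le> (\<Sum>j\<in>{..<d}. real (card (S (\<lambda>i. if i \<in> C then 1 else 0) j)) + real (card (S (\<lambda>i. x i j) j)) + real (card (S (\<lambda>i. - x i j) j)))"
    unfolding of_nat_sum
  proof (intro sum_mono)
    fix j
    have "card (S (\<lambda>i. if i \<in> C then 1 else 0) j \<union> S (\<lambda>i. x i j) j \<union> S (\<lambda>i. - x i j) j)
       \<le> card (S (\<lambda>i. if i \<in> C then 1 else 0) j) + card (S (\<lambda>i. x i j) j) + card (S (\<lambda>i. - x i j) j)"
      by (meson add_mono_thms_linordered_semiring(3) card_Un_le order.trans)
    thus "real (card (S (\<lambda>i. if i \<in> C then 1 else 0) j \<union> S (\<lambda>i. x i j) j \<union> S (\<lambda>i. - x i j) j))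
       \<le> real (card (S (\<lambda>i. if i \<in> C then 1 else 0) j)) + real (card (S (\<lambda>i. x i j) j)) + real (card (S (\<lambda>i. - x i j) j))"
      by linarith
  qed
  also have "\<dots> \<le> (\<Sum>j\<in>{..<d}. card P * E0 + card P * E0 + card P * E0)"
    by (intro sum_mono add_mono cS) (use xb in auto)
  also have "\<dots> = card P * (real d * (3 * E0))" by (simp add: algebra_simps)
  finally show ?thesis unfolding P_def k_def t2_def E0_def L_def .
qed



lemma prob_bind_le:
  assumes "\<And>x. x \<in> set_pmf p \<Longrightarrow> measure_pmf.prob (f x) A \<le> b" "0 \<le> b"
  shows "measure_pmf.prob (p \<bind> f) A \<le> b"
proof -
  have "ennreal (measure_pmf.prob (p \<bind> f) A) = emeasure (measure_pmf (p \<bind> f)) A"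
    by (simp add: measure_pmf.emeasure_eq_measure)
  also have "\<dots> = (\<integral>\<^sup>+x. emeasure (measure_pmf (f x)) A \<partial>measure_pmf p)" by (rule emeasure_bind_pmf)
  also have "\<dots> \<le> (\<integral>\<^sup>+x. ennreal b \<partial>measure_pmf p)"
    by (intro nn_integral_mono_AE AE_pmfI) (simp add: measure_pmf.emeasure_eq_measure assms)
  also have "\<dots> = ennreal b" by (simp add: measure_pmf.emeasure_space_1)
  finally show ?thesis using assms(2) by (simp add: ennreal_le_iff)
qed

lemma prob_bind_pmf_of_set:
  assumes "finite S" "S \<noteq> {}"
  shows "measure_pmf.prob (pmf_of_set S \<bind> f) A = (\<Sum>x\<in>S. measure_pmf.prob (f x) A) / card S"
proof -
  have "ennreal (measure_pmf.prob (pmf_of_set S \<bind> f) A) = emeasure (measure_pmf (pmf_of_set S \<bind> f)) A"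
    by (simp add: measure_pmf.emeasure_eq_measure)
  also have "\<dots> = (\<integral>\<^sup>+x. emeasure (measure_pmf (f x)) A \<partial>measure_pmf (pmf_of_set S))" by (rule emeasure_bind_pmf)
  also have "\<dots> = (\<integral>\<^sup>+x. ennreal (measure_pmf.prob (f x) A) \<partial>measure_pmf (pmf_of_set S))"
    by (simp add: measure_pmf.emeasure_eq_measure)
  also have "\<dots> = ennreal (measure_pmf.expectation (pmf_of_set S) (\<lambda>x. measure_pmf.prob (f x) A))"
    by (intro nn_integral_eq_integral measure_pmf.integrable_const_bound[where B=1]) auto
  also have "measure_pmf.expectation (pmf_of_set S) (\<lambda>x. measure_pmf.prob (f x) A) = (\<Sum>x\<in>S. measure_pmf.prob (f x) A) / card S"
    using assms by (simp add: integral_pmf_of_set)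
  finally show ?thesis by (subst (asm) ennreal_inj) (auto intro!: divide_nonneg_nonneg sum_nonneg)
qed

lemma const_bound:
  fixes \<beta> :: real and d :: nat
  assumes b: "0 < \<beta>" "\<beta> < 1" and d: "0 < d"
  defines "c0 \<equiv> sqrt (2 * (1 + ln 6 / ln (1 / \<beta>)))"
  shows "exp (- (c0\<^sup>2) * ln (real d / \<beta>) / 2) \<le> \<beta> / (6 * real d)"
proof -
  define LB where "LB = ln (1 / \<beta>)"
  define L where "L = ln (real d / \<beta>)"
  have LB: "0 < LB" using b LB_def by simp
  have L: "L = ln (real d) + LB" using b d unfolding L_def LB_def by (simp add: ln_div)
  have LL: "LB \<le> L" using L d by simp
  have c2: "c0\<^sup>2 = 2 * (1 + ln 6 / LB)" unfolding c0_def LB_def using LB LB_def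
    by (subst real_sqrt_pow2) (auto intro!: add_nonneg_nonneg divide_nonneg_nonneg)
  have "- (c0\<^sup>2) * L / 2 = - L - (ln 6 / LB) * L" unfolding c2 by (simp add: field_simps)
  also have "\<dots> \<le> - L - ln 6"
  proof -
    have "ln 6 = (ln 6 / LB) * LB" using LB by simp
    also have "\<dots> \<le> (ln 6 / LB) * L" using LB LL by (intro mult_left_mono) auto
    finally show ?thesis by simp
  qed
  finally have "exp (- (c0\<^sup>2) * L / 2) \<le> exp (- L - ln 6)" by simp
  also have "exp (- L - ln 6) = (\<beta> / real d) / 6"
    using b d unfolding L_def by (simp add: exp_diff exp_minus)
  finally show ?thesis unfolding L_def by simp
qed



theorem mainTheorem10:
  fixes \<beta> :: real
  assumes "0 < \<beta>" "\<beta> < 1"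
  shows "\<exists>c::real. \<forall>(\<epsilon>::real) (d::nat) (m::nat) (n::nat) (x::nat \<Rightarrow> nat \<Rightarrow> real) M.
     0 < \<epsilon> \<longrightarrow> 0 < d \<longrightarrow> 0 < m \<longrightarrow> m \<le> n \<longrightarrow> d dvd n \<longrightarrow>
     (\<forall>i<n. \<forall>j<d. \<bar>x i j\<bar> \<le> 1) \<longrightarrow> valid_attacker \<epsilon> m n M \<longrightarrow>
     measure_pmf.prob (manip_est n d \<epsilon> x M)
       {z. (MAX j\<in>{..<d}. \<bar>z j - (1 / real n) * (\<Sum>i<n. x i j)\<bar>)
           < c * rr_scale \<epsilon> * (sqrt (real d / real n * ln (real d / \<beta>)) + real m / real n)}
     \<ge> 1 - \<beta>"
proof -
  define c0 where "c0 = sqrt (2 * (1 + ln 6 / ln (1 / \<beta>)))"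
  have c0: "0 < c0" unfolding c0_def using assms by (auto intro!: add_pos_nonneg divide_nonneg_nonneg)
  show ?thesis
  proof (intro exI[of _ "4 * c0 + 2"] allI impI)
    fix \<epsilon> :: real and d m n :: nat and x :: "nat \<Rightarrow> nat \<Rightarrow> real" and M
    assume eps: "0 < \<epsilon>" and d: "0 < d" and m: "0 < m" and mn: "m \<le> n" and dvd: "d dvd n"
      and xb: "\<forall>i<n. \<forall>j<d. \<bar>x i j\<bar> \<le> 1" and va: "valid_attacker \<epsilon> m n M"
    have n: "0 < n" using m mn by simp
    define P where "P = est_partitions n d"
    define E0 where "E0 = exp (- (c0\<^sup>2) * ln (real d / \<beta>) / 2)"
    have E0: "E0 \<le> \<beta> / (6 * real d)" unfolding E0_def c0_def by (rule const_bound[OF assms d])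
    have L: "0 < ln (real d / \<beta>)" using assms d by simp
    have finP: "finite P" and neP: "P \<noteq> {}" unfolding P_def
      by (auto simp: finite_est_partitions est_partitions_nonempty[OF d dvd])
    define Good where "Good = {z. (MAX j\<in>{..<d}. \<bar>z j - (1 / real n) * (\<Sum>i<n. x i j)\<bar>)
           < (4 * c0 + 2) * rr_scale \<epsilon> * (sqrt (real d / real n * ln (real d / \<beta>)) + real m / real n)}"
    define goodg where "goodg = (\<lambda>C g. \<forall>j<d. (\<Sum>i\<in>{i. i < n \<and> g i = j}. (if i \<in> C then 1 else 0)) < real (n div d) * ((\<Sum>i<n. (if i \<in> C then 1 else 0)) / n) + c0 * sqrt (real (n div d) * ln (real d / \<beta>))
              \<and> (\<Sum>i\<in>{i. i < n \<and> g i = j}. x i j) < real (n div d) * ((\<Sum>i<n. x i j) / n) + c0 * sqrt (real (n div d) * ln (real d / \<beta>))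
              \<and> (\<Sum>i\<in>{i. i < n \<and> g i = j}. - x i j) < real (n div d) * ((\<Sum>i<n. - x i j) / n) + c0 * sqrt (real (n div d) * ln (real d / \<beta>)))"
    define Z where "Z = (\<lambda>g y. (\<lambda>j. if j < d then real d / real n * (\<Sum>i\<in>{i. i < n \<and> g i = j}. y i) else (0::real)))"
    define Y where "Y = (\<lambda>C f g. Pi_pmf {..<n} 0 (\<lambda>i. if i \<in> C then return_pmf (f g i) else est_randomizer \<epsilon> (x i (g i))))"
    have eq: "manip_est n d \<epsilon> x M = M \<bind> (\<lambda>Cf. pmf_of_set P \<bind> (\<lambda>g. map_pmf (Z g) (Y (fst Cf) (snd Cf) g)))"
      unfolding manip_est_def P_def map_pmf_def Z_def Y_def
      by (subst bind_commute_pmf) (simp add: case_prod_unfold)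
    have "measure_pmf.prob (manip_est n d \<epsilon> x M) (UNIV - Good) \<le> 5 * real d * E0"
      unfolding eq
    proof (rule prob_bind_le)
      fix Cf assume Cf: "Cf \<in> set_pmf M"
      obtain C f where Cf_eq: "Cf = (C, f)" by (cases Cf)
      have vv: "C \<subseteq> {..<n} \<and> card C = m \<and> (\<forall>S i. i \<in> C \<longrightarrow> f S i \<in> {rr_scale \<epsilon>, - rr_scale \<epsilon>})"
        using va Cf unfolding valid_attacker_def Cf_eq by fast
      hence C: "C \<subseteq> {..<n}" "card C = m" and fC: "\<forall>S i. i \<in> C \<longrightarrow> f S i \<in> {rr_scale \<epsilon>, - rr_scale \<epsilon>}"
        by blast+
      have each: "measure_pmf.prob (map_pmf (Z g) (Y C f g)) (UNIV - Good) \<le> real d * (2 * E0) + (if goodg C g then 0 else 1)"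
        if g: "g \<in> P" for g
      proof (cases "goodg C g")
        case True
        have "measure_pmf.prob (map_pmf (Z g) (Y C f g)) (UNIV - Good) = measure_pmf.prob (Y C f g) (Z g -` (UNIV - Good))"
          by (simp add: measure_map_pmf)
        also have "Z g -` (UNIV - Good) = {y. \<not> ((MAX j\<in>{..<d}. \<bar>(if j < d then real d / real n * (\<Sum>i\<in>{i. i < n \<and> g i = j}. y i) else 0) - (1 / real n) * (\<Sum>i<n. x i j)\<bar>)
               < (4 * c0 + 2) * rr_scale \<epsilon> * (sqrt (real d / real n * ln (real d / \<beta>)) + real m / real n))}"
          unfolding Z_def Good_def by auto
        also have "measure_pmf.prob (Y C f g) \<dots> \<le> real d * (2 * E0)"
          unfolding Y_def E0_def
          by (rule y_side[OF eps d dvd n xb _ C _ c0 L]) (use g fC True in \<open>auto simp: P_def goodg_def\<close>)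
        finally show ?thesis using True by simp
      next
        case False
        have X: "measure_pmf.prob (map_pmf (Z g) (Y C f g)) (UNIV - Good) \<le> 1" by (rule measure_pmf.prob_le_1)
        have Y0: "0 \<le> real d * (2 * E0)" unfolding E0_def by simp
        have "(if goodg C g then 0 else 1) = (1::real)" using False by simp
        thus ?thesis using X Y0 by linarith
      qed
      have peq: "measure_pmf.prob (pmf_of_set P \<bind> (\<lambda>g. map_pmf (Z g) (Y (fst Cf) (snd Cf) g))) (UNIV - Good)
          = (\<Sum>g\<in>P. measure_pmf.prob (map_pmf (Z g) (Y C f g)) (UNIV - Good)) / card P"
        unfolding Cf_eq by (simp add: prob_bind_pmf_of_set finP neP del: measure_map_pmf)
      have "(\<Sum>g\<in>P. measure_pmf.prob (map_pmf (Z g) (Y C f g)) (UNIV - Good))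
             \<le> (\<Sum>g\<in>P. real d * (2 * E0) + (if goodg C g then 0 else 1))"
        by (intro sum_mono each)
      also have "\<dots> = card P * (real d * (2 * E0)) + real (card {g \<in> P. \<not> goodg C g})"
        using finP by (simp add: sum.distrib sum.If_cases Int_def)
      also have "real (card {g \<in> P. \<not> goodg C g}) \<le> card P * (real d * (3 * E0))"
        unfolding P_def goodg_def E0_def by (rule part_side[OF d dvd n xb c0 L])
      finally have sb: "(\<Sum>g\<in>P. measure_pmf.prob (map_pmf (Z g) (Y C f g)) (UNIV - Good))
          \<le> card P * (5 * real d * E0)"
        by (simp add: algebra_simps)
      have cP: "0 < real (card P)" using finP neP by (simp add: card_gt_0_iff)
      show "measure_pmf.prob (pmf_of_set P \<bind> (\<lambda>g. map_pmf (Z g) (Y (fst Cf) (snd Cf) g))) (UNIV - Good) \<le> 5 * real d * E0"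
        unfolding peq using sb cP by (simp add: divide_le_eq mult.commute)
    qed (simp add: E0_def)
    also have "5 * real d * E0 \<le> \<beta>"
    proof -
      have "5 * real d * E0 \<le> 5 * real d * (\<beta> / (6 * real d))" using E0 by (intro mult_left_mono) auto
      also have "\<dots> \<le> \<beta>" using d assms by (simp add: field_simps)
      finally show ?thesis .
    qed
    finally have "measure_pmf.prob (manip_est n d \<epsilon> x M) (UNIV - Good) \<le> \<beta>" .
    moreover have "measure_pmf.prob (manip_est n d \<epsilon> x M) (UNIV - Good) = 1 - measure_pmf.prob (manip_est n d \<epsilon> x M) Good"
      using measure_pmf.prob_compl[of Good "manip_est n d \<epsilon> x M"] by simp
    ultimately show "measure_pmf.prob (manip_est n d \<epsilon> x M)
       {z. (MAX j\<in>{..<d}. \<bar>z j - (1 / real n) * (\<Sum>i<n. x i j)\<bar>)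
           < (4 * c0 + 2) * rr_scale \<epsilon> * (sqrt (real d / real n * ln (real d / \<beta>)) + real m / real n)} \<ge> 1 - \<beta>"
      unfolding Good_def by simp
  qed
qed


end
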